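(* Let $f$ be proper lower semicontinuous with the K\L{} property at $x^*$ with desingularizing function $\varphi:[0,\eta[\to[0,\infty[$, the K\L{} inequality holding on $\Gamma_\eta(x^*,\delta)$. Let $(x^k)$ satisfy $\mathbf{H}_1$, $\mathbf{H}_2$, $\mathbf{H}_3$, put $M=\sup_{k\ge1}\frac1{a_kb_k}$, and assume $\mathbf{S}(x^*,\delta,\rho)$ holds. Then for all $K\ge1$, $x^K\in\underline{\Gamma}_\eta(x^*,\rho)$ and $$\sum_{k=1}^K\|x^{k+1}-x^k\|+\|x^{K+1}-x^K\|\le\|x^1-x^0\|+M\big[\varphi(f(x^1)-f(x^* ))-\varphi(f(x^{K+1})-f(x^* ))\big]+\sum_{k=1}^K\varepsilon_k.$$
   Context: $\partial f$ limiting Fréchet subdifferential, lazy slope $\|\partial f(x)\|_-=\inf_{p\in\partial f(x)}\|p\|$. K\L{} inequality on $\Gamma_\eta(x^*,\delta)=\{x:\|x-x^*\|<\delta,\ f(x^* )<f(x)<f(x^* )+\eta\}$: $\varphi'(f(x)-f(x^* ))\|\partial f(x)\|_-\ge1$, with $\varphi$ continuous concave, $\varphi(0)=0$, $C^1$ with $\varphi'>0$ on $]0,\eta[$. $\underline{\Gamma}_\eta(x^*,r)=\{x:\|x-x^*\|<r,\ f(x^* )\le f(x)<f(x^* )+\eta\}$, $\Gamma_\eta(x^*,r)$ the same with strict inequality $f(x^* )<f(x)$. $\mathbf{H}_1$: $f(x^{k+1})+a_k\|x^{k+1}-x^k\|^2\le f(x^k)$, $a_k>0$. $\mathbf{H}_2$: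 $b_{k+1}\|\partial f(x^{k+1})\|_-\le\|x^{k+1}-x^k\|+\varepsilon_{k+1}$, $b_{k+1}>0$, $\varepsilon_{k+1}\ge0$. $\mathbf{H}_3$: (i) $a_k\ge\underline a>0$; (ii) $(b_k)\notin\ell^1$; (iii) $M<\infty$; (iv) $(\varepsilon_k)\in\ell^1$. $\mathbf{S}(x^*,\delta,\rho)$: $\delta>\rho>0$ and (i) for each $k$, if $x^0,\dots,x^k\in\underline{\Gamma}_\eta(x^*,\rho)$ then $x^{k+1}\in\underline{\Gamma}_\eta(x^*,\delta)$; (ii) $x^0\in\Gamma_\eta(x^*,\rho)$ and $\|x^*-x^0\|+2\sqrt{\frac{f(x^0)-f(x^* )}{a_0}}+M\varphi(f(x^0)-f(x^* ))+\sum_{i=1}^\infty\varepsilon_i<\rho$. *)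

theory Defs
  imports "HOL-Analysis.Analysis"
begin

definition proper_fun :: "('a \<Rightarrow> ereal) \<Rightarrow> bool" where
  "proper_fun f \<longleftrightarrow> (\<forall>x. f x \<noteq> -\<infinity>) \<and> (\<exists>x. f x \<noteq> \<infinity>)"

definition lsc_fun :: "('a::topological_space \<Rightarrow> ereal) \<Rightarrow> bool" where
  "lsc_fun f \<longleftrightarrow> (\<forall>c::ereal. closed {x. f x \<le> c})"

text \<open>Frechet subdifferential (written out via its epsilon-delta form of the liminf condition).\<close>
definition frechet_subdiff :: "('a::real_inner \<Rightarrow> ereal) \<Rightarrow> 'a \<Rightarrow> 'a set" where
  "frechet_subdiff f x = {p. \<bar>f x\<bar> \<noteq> \<infinity> \<and>
     (\<forall>e>0. \<exists>d>0. \<forall>y. norm (y - x) < d \<longrightarrow>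
        ereal (real_of_ereal (f x) + inner p (y - x) - e * norm (y - x)) \<le> f y)}"

definition limiting_subdiff :: "('a::real_inner \<Rightarrow> ereal) \<Rightarrow> 'a \<Rightarrow> 'a set" where
  "limiting_subdiff f x = {p. \<bar>f x\<bar> \<noteq> \<infinity> \<and>
     (\<exists>xs ps. xs \<longlonglongrightarrow> x \<and> (\<lambda>n. f (xs n)) \<longlonglongrightarrow> f x \<and>
        (\<forall>n. ps n \<in> frechet_subdiff f (xs n)) \<and> ps \<longlonglongrightarrow> p)}"

text \<open>Lazy slope; equals +\<infinity> when the subdifferential is empty.\<close>
definition lazy_slope :: "('a::real_inner \<Rightarrow> ereal) \<Rightarrow> 'a \<Rightarrow> ereal" where
  "lazy_slope f x = (INF p\<in>limiting_subdiff f x. ereal (norm p))"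

definition Gamma_set :: "('a::real_normed_vector \<Rightarrow> ereal) \<Rightarrow> 'a \<Rightarrow> real \<Rightarrow> real \<Rightarrow> 'a set" where
  "Gamma_set f xs eta r = {x. norm (x - xs) < r \<and> f xs < f x \<and> f x < f xs + ereal eta}"

definition Gamma_under :: "('a::real_normed_vector \<Rightarrow> ereal) \<Rightarrow> 'a \<Rightarrow> real \<Rightarrow> real \<Rightarrow> 'a set" where
  "Gamma_under f xs eta r = {x. norm (x - xs) < r \<and> f xs \<le> f x \<and> f x < f xs + ereal eta}"

definition desing :: "real \<Rightarrow> (real \<Rightarrow> real) \<Rightarrow> (real \<Rightarrow> real) \<Rightarrow> bool" where
  "desing eta phi dphi \<longleftrightarrow> 0 < eta \<and> continuous_on {0..<eta} phi \<and> concave_on {0..<eta} phi \<and>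
     phi 0 = 0 \<and> (\<forall>s\<ge>0. s < eta \<longrightarrow> phi s \<ge> 0) \<and>
     (\<forall>s. 0 < s \<and> s < eta \<longrightarrow> (phi has_real_derivative dphi s) (at s) \<and> dphi s > 0) \<and>
     continuous_on {0<..<eta} dphi"

definition KL_at :: "('a::real_inner \<Rightarrow> ereal) \<Rightarrow> 'a \<Rightarrow> real \<Rightarrow> real \<Rightarrow> (real \<Rightarrow> real) \<Rightarrow> (real \<Rightarrow> real) \<Rightarrow> bool" where
  "KL_at f xs eta delta phi dphi \<longleftrightarrow> \<bar>f xs\<bar> \<noteq> \<infinity> \<and> desing eta phi dphi \<and>
     (\<forall>x\<in>Gamma_set f xs eta delta.
        ereal (dphi (real_of_ereal (f x) - real_of_ereal (f xs))) * lazy_slope f x \<ge> 1)"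

end

theory Submission imports Defs begin

lemma desing_tangent:
  assumes "desing eta phi dphi" "0 < r" "r < eta" "0 \<le> s" "s < eta"
  shows "phi s \<le> phi r + dphi r * (s - r)"
proof -
  have cv: "convex_on {0..<eta} (\<lambda>x. - phi x)" using assms(1) by (simp add: desing_def concave_on_def)
  have ri: "r \<in> interior {0..<eta}" using assms by auto
  have si: "s \<in> {0..<eta}" using assms by auto
  have der: "((\<lambda>x. - phi x) has_field_derivative - dphi r) (at r within {0..<eta})"
  proof -
    have "(phi has_real_derivative dphi r) (at r)" using assms unfolding desing_def by blast
    then have "((\<lambda>x. - phi x) has_real_derivative - dphi r) (at r)" by (rule DERIV_minus)
    then show ?thesis by (rule has_field_derivative_at_within)
  qed
  have "(- phi s) - (- phi r) \<ge> (- dphi r) * (s - r)"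
    by (rule convex_on_imp_above_tangent[OF cv _ ri si der]) simp
  then show ?thesis by (simp add: algebra_simps)
qed

lemma desing_D:
  assumes "desing eta phi dphi" "0 < t" "t < eta"
  shows "(phi has_real_derivative dphi t) (at t)" "dphi t > 0"
  using assms unfolding desing_def by blast+

lemma desing_nn:
  assumes "desing eta phi dphi" "0 \<le> t" "t < eta"
  shows "phi t \<ge> 0"
  using assms unfolding desing_def by blast

lemma desing_mono:
  assumes "desing eta phi dphi" "0 \<le> s" "s \<le> r" "r < eta"
  shows "phi s \<le> phi r"
proof (cases "s = r")
  case False
  then have "s < r" using assms(3) by linarith
  have "phi s < phi r"
  proof (rule DERIV_pos_imp_increasing_open[OF \<open>s < r\<close>])
    fix y assume "s < y" "y < r"
    then have "0 < y" "y < eta" using assms by linarith+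
    then show "\<exists>z. DERIV phi y :> z \<and> 0 < z" using desing_D[OF assms(1)] by blast
  next
    show "continuous_on {s..r} phi"
    proof -
      have "continuous_on {0..<eta} phi" using assms(1) unfolding desing_def by blast
      moreover have "{s..r} \<subseteq> {0..<eta}" using assms by auto
      ultimately show ?thesis by (rule continuous_on_subset)
    qed
  qed
  then show ?thesis by simp
qed simp

lemma ereal_slope:
  fixes L :: ereal
  assumes "ereal d * L \<ge> 1" "d > 0" "ereal b * L \<le> ereal C" "b > 0"
  shows "b \<le> C * d"
proof (cases L)
  case (real l)
  then have "d * l \<ge> 1" "b * l \<le> C" using assms(1,3) by simp_all
  have "b \<le> b * (d * l)" using \<open>d*l\<ge>1\<close> assms(4) by simp
  also have "\<dots> = (b * l) * d" by simp
  also have "\<dots> \<le> C * d" using \<open>b*l \<le> C\<close> assms(2) by simp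
  finally show ?thesis .
next
  case PInf then show ?thesis using assms(3,4) by simp
next
  case MInf then show ?thesis using assms(1,2) by simp
qed


lemma sum_1_shift: "(\<Sum>k=1..K. g k) = (\<Sum>i<K. g (Suc i)::real)"
  by (induction K) (auto simp: sum.lessThan_Suc)

theorem mainTheorem8:
  fixes f :: "'a::{real_inner, complete_space} \<Rightarrow> ereal"
    and xs :: 'a and x :: "nat \<Rightarrow> 'a"
    and a b eps :: "nat \<Rightarrow> real"
    and eta delta rho abar :: real and phi dphi :: "real \<Rightarrow> real"
  assumes proper: "proper_fun f" and lsc: "lsc_fun f"
    and KL: "KL_at f xs eta delta phi dphi"
    and H1: "\<And>k. a k > 0 \<and> f (x (Suc k)) + ereal (a k * (norm (x (Suc k) - x k))\<^sup>2) \<le> f (x k)"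
    and H2: "\<And>k. b (Suc k) > 0 \<and> eps (Suc k) \<ge> 0 \<and>
               ereal (b (Suc k)) * lazy_slope f (x (Suc k)) \<le> ereal (norm (x (Suc k) - x k) + eps (Suc k))"
    and H3i: "abar > 0" "\<And>k. a k \<ge> abar"
    and H3ii: "\<not> summable (\<lambda>k. b (Suc k))"
    and H3iii: "bdd_above ((\<lambda>k. 1 / (a k * b k)) ` {1..})"
    and H3iv: "summable (\<lambda>k. eps (Suc k))"
    and S_rho: "0 < rho" "rho < delta"
    and S_i: "\<And>k. (\<forall>i\<le>k. x i \<in> Gamma_under f xs eta rho) \<Longrightarrow> x (Suc k) \<in> Gamma_under f xs eta delta"
    and S_ii: "x 0 \<in> Gamma_set f xs eta rho"
      "norm (xs - x 0) + 2 * sqrt ((real_of_ereal (f (x 0)) - real_of_ereal (f xs)) / a 0)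
         + (SUP k\<in>{1..}. 1 / (a k * b k)) * phi (real_of_ereal (f (x 0)) - real_of_ereal (f xs))
         + (\<Sum>i. eps (Suc i)) < rho"
  shows "\<forall>K\<ge>1. x K \<in> Gamma_under f xs eta rho \<and>
     (\<Sum>k=1..K. norm (x (Suc k) - x k)) + norm (x (Suc K) - x K)
       \<le> norm (x 1 - x 0)
         + (SUP k\<in>{1..}. 1 / (a k * b k)) *
             (phi (real_of_ereal (f (x 1)) - real_of_ereal (f xs))
              - phi (real_of_ereal (f (x (Suc K))) - real_of_ereal (f xs)))
         + (\<Sum>k=1..K. eps k)"
proof -
  define M where "M = (SUP k\<in>{1..}. 1 / (a k * b k))"
  define F where "F k = real_of_ereal (f (x k))" for k
  define c where "c = real_of_ereal (f xs)"
  define D where "D k = norm (x (Suc k) - x k)" for k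
  define S where "S K = (\<Sum>k=1..K. D k)" for K
  define r where "r k = F k - c" for k
  have KLc: "\<bar>f xs\<bar> \<noteq> \<infinity> \<and> desing eta phi dphi \<and>
     (\<forall>x\<in>Gamma_set f xs eta delta.
        ereal (dphi (real_of_ereal (f x) - real_of_ereal (f xs))) * lazy_slope f x \<ge> 1)"
    using KL unfolding KL_at_def .
  have ds: "desing eta phi dphi" using KLc by (rule conjunct1[OF conjunct2])
  have fxsfin: "\<bar>f xs\<bar> \<noteq> \<infinity>" using KLc by (rule conjunct1)
  have KLi: "ereal (dphi (real_of_ereal (f y) - real_of_ereal (f xs))) * lazy_slope f y \<ge> 1"
    if "y \<in> Gamma_set f xs eta delta" for y
    using conjunct2[OF conjunct2[OF KLc]] that by (rule bspec)
  have apos: "a k > 0" for k using H1 by blast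
  have bpos: "b (Suc k) > 0" and epos: "eps (Suc k) \<ge> 0" for k using H2 by auto
  have Mge: "1 / (a k * b k) \<le> M" if "k \<ge> 1" for k
    unfolding M_def using that H3iii by (intro cSUP_upper) auto
  have M0: "M \<ge> 0"
  proof -
    have "0 < 1 / (a 1 * b 1)" using apos[of 1] bpos[of 0] by simp
    then show ?thesis using Mge[of 1] by linarith
  qed
  have fxs: "f xs = ereal c" using fxsfin unfolding c_def by (cases "f xs") auto
  have x0G: "c < F 0" "F 0 < c + eta" "norm (x 0 - xs) < rho" and fx0fin: "\<bar>f (x 0)\<bar> \<noteq> \<infinity>"
  proof -
    have g: "f xs < f (x 0)" "f (x 0) < f xs + ereal eta" "norm (x 0 - xs) < rho"
      using S_ii(1) unfolding Gamma_set_def by auto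
    then show fx0fin: "\<bar>f (x 0)\<bar> \<noteq> \<infinity>" using fxs by auto
    then have "f (x 0) = ereal (F 0)" unfolding F_def by (cases "f (x 0)") auto
    then show "c < F 0" "F 0 < c + eta" "norm (x 0 - xs) < rho" using g fxs by auto
  qed
  have fin: "\<bar>f (x k)\<bar> \<noteq> \<infinity>" for k
  proof (induction k)
    case 0 then show ?case using fx0fin .
  next
    case (Suc k)
    have "f (x (Suc k)) \<noteq> -\<infinity>" using proper unfolding proper_fun_def by auto
    moreover have "f (x (Suc k)) \<noteq> \<infinity>"
    proof
      assume "f (x (Suc k)) = \<infinity>"
      then have "f (x k) = \<infinity>" using H1[of k] by auto
      then show False using Suc by auto
    qed
    ultimately show ?case by auto
  qed
  have fx: "f (x k) = ereal (F k)" for k using fin[of k] unfolding F_def by (cases "f (x k)") auto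
  have H1': "F (Suc k) + a k * (D k)^2 \<le> F k" for k
    using H1[of k] unfolding fx D_def by simp
  have Gu: "x k \<in> Gamma_under f xs eta R \<longleftrightarrow> norm (x k - xs) < R \<and> c \<le> F k \<and> F k < c + eta" for k R
    unfolding Gamma_under_def by (simp add: fx fxs)
  have Gs: "x k \<in> Gamma_set f xs eta R \<longleftrightarrow> norm (x k - xs) < R \<and> c < F k \<and> F k < c + eta" for k R
    unfolding Gamma_set_def by (simp add: fx fxs)
  have Fdec: "F (Suc k) \<le> F k" for k proof -
    have "a k * (D k)^2 \<ge> 0" using apos[of k] by simp
    then show ?thesis using H1'[of k] by linarith
  qed
  have D0: "D k \<ge> 0" for k unfolding D_def by simp
  have step: "2 * D (Suc j) \<le> D j + M * (phi (r (Suc j)) - phi (r (Suc (Suc j)))) + eps (Suc j)"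
    if A: "x (Suc j) \<in> Gamma_under f xs eta rho" and B: "x (Suc (Suc j)) \<in> Gamma_under f xs eta delta" for j
  proof -
    let ?k = "Suc j"
    have rk: "0 \<le> r ?k" "r ?k < eta" "norm (x ?k - xs) < rho" using A unfolding Gu r_def by auto
    have rk1: "0 \<le> r (Suc ?k)" "r (Suc ?k) < eta" using B unfolding Gu r_def by auto
    have rdiff: "r ?k - r (Suc ?k) \<ge> a ?k * (D ?k)^2" using H1'[of ?k] unfolding r_def by simp
    show ?thesis
    proof (cases "r ?k = 0")
      case True
      then have "a ?k * (D ?k)^2 \<le> 0" using rdiff rk1 by simp
      then have Dk0: "D ?k = 0" using apos[of ?k] D0[of ?k]
        by (simp add: mult_le_0_iff)
      have "a ?k * (D ?k)^2 \<ge> 0" using apos[of ?k] by simp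
      then have "r (Suc ?k) = 0" using True rdiff rk1 by linarith
      then show ?thesis using Dk0 True D0[of j] epos[of j] by simp
    next
      case False
      then have rpos: "r ?k > 0" using rk by simp
      have "x ?k \<in> Gamma_set f xs eta delta" using rk rpos S_rho unfolding Gs r_def by auto
      from KLi[OF this] have k1: "ereal (dphi (r ?k)) * lazy_slope f (x ?k) \<ge> 1"
        unfolding fx fxs r_def by simp
      have dpos: "dphi (r ?k) > 0" using desing_D(2)[OF ds rpos rk(2)] .
      have bC: "b ?k \<le> (D j + eps ?k) * dphi (r ?k)"
        using ereal_slope[OF k1 dpos _ bpos[of j]] H2[of j] unfolding D_def by auto
      define Dp where "Dp = phi (r ?k) - phi (r (Suc ?k))"
      have tang: "phi (r (Suc ?k)) \<le> phi (r ?k) + dphi (r ?k) * (r (Suc ?k) - r ?k)"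
        using desing_tangent[OF ds rpos rk(2) rk1] .
      have "dphi (r ?k) * (a ?k * (D ?k)^2) \<le> dphi (r ?k) * (r ?k - r (Suc ?k))"
        using rdiff dpos by simp
      also have "\<dots> \<le> Dp" using tang unfolding Dp_def by (simp add: algebra_simps)
      finally have e1: "dphi (r ?k) * (a ?k * (D ?k)^2) \<le> Dp" .
      have "dphi (r ?k) * (a ?k * (D ?k)^2) \<ge> 0" using dpos apos[of ?k] by simp
      then have Dp0: "Dp \<ge> 0" using e1 by linarith
      have C0: "D j + eps ?k \<ge> 0" using D0[of j] epos[of j] by simp
      have "b ?k * (a ?k * (D ?k)^2) \<le> (D j + eps ?k) * dphi (r ?k) * (a ?k * (D ?k)^2)"
        using bC apos[of ?k] by (simp add: mult_right_mono)
      also have "\<dots> \<le> (D j + eps ?k) * Dp"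
        using mult_left_mono[OF e1 C0] by (simp add: mult.assoc)
      finally have e2: "(a ?k * b ?k) * (D ?k)^2 \<le> (D j + eps ?k) * Dp" by (simp add: algebra_simps)
      have abpos: "a ?k * b ?k > 0" using apos[of ?k] bpos[of j] by simp
      have "(D ?k)^2 \<le> (D j + eps ?k) * Dp / (a ?k * b ?k)"
        using e2 abpos by (simp add: field_simps)
      also have "\<dots> = (D j + eps ?k) * Dp * (1 / (a ?k * b ?k))" by simp
      also have "\<dots> \<le> (D j + eps ?k) * Dp * M"
        using mult_left_mono[OF Mge[of ?k], of "(D j + eps ?k) * Dp"] C0 Dp0 by simp
      finally have e3: "(D ?k)^2 \<le> (D j + eps ?k) * (M * Dp)" by (simp add: algebra_simps)
      have MDp: "M * Dp \<ge> 0" using M0 Dp0 by simp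
      have sq: "0 \<le> (D j + eps ?k - M * Dp)^2" by simp
      have id1: "(D j + eps ?k + M * Dp)^2 = (D j + eps ?k - M * Dp)^2 + 4 * ((D j + eps ?k) * (M * Dp))"
        by algebra
      have id2: "(2 * D ?k)^2 = 4 * (D ?k)^2" by algebra
      have "(2 * D ?k)^2 \<le> (D j + eps ?k + M * Dp)^2"
        unfolding id1 id2 using e3 sq by linarith
      then have "2 * D ?k \<le> D j + eps ?k + M * Dp"
        by (rule power2_le_imp_le) (use C0 MDp in auto)
      then show ?thesis unfolding Dp_def by (simp add: algebra_simps)
    qed
  qed
  have tri: "norm (x n - xs) \<le> norm (x 0 - xs) + (\<Sum>k<n. D k)" for n
  proof (induction n)
    case (Suc n)
    have "norm (x (Suc n) - xs) \<le> D n + norm (x n - xs)"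
      unfolding D_def using norm_triangle_ineq[of "x (Suc n) - x n" "x n - xs"] by simp
    then show ?case using Suc by (simp add: sum.lessThan_Suc)
  qed simp
  have x1G: "x 1 \<in> Gamma_under f xs eta delta" using S_i[of 0] x0G Gu[of 0] by auto
  have r0: "0 \<le> r 1" "r 1 \<le> r 0" "r 0 < eta" using x1G x0G Fdec[of 0] unfolding Gu r_def by auto
  have phi1: "phi (r 1) \<le> phi (r 0)" using desing_mono[OF ds r0] .
  have D0bound: "D 0 \<le> sqrt (r 0 / a 0)"
  proof -
    have "a 0 * (D 0)^2 \<le> r 0" using H1'[of 0] r0(1) unfolding r_def by simp
    then have "(D 0)^2 \<le> r 0 / a 0" using apos[of 0] by (simp add: field_simps)
    then show ?thesis using D0[of 0] by (simp add: real_le_rsqrt)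
  qed
  have epsb: "(\<Sum>k=1..K. eps k) \<le> (\<Sum>i. eps (Suc i))" for K
    unfolding sum_1_shift using sum_le_suminf[OF H3iv, of "{..<K}"] epos by auto
  have phinn: "phi (r k) \<ge> 0" if "x k \<in> Gamma_under f xs eta delta" for k
    using that desing_nn[OF ds] unfolding Gu r_def by simp
  have main: "(\<forall>i\<le>K. x i \<in> Gamma_under f xs eta rho) \<and>
      S K + D K \<le> D 0 + M * (phi (r 1) - phi (r (Suc K))) + (\<Sum>k=1..K. eps k)" for K
  proof (induction K)
    case 0
    show ?case using x0G Gu[of 0] unfolding S_def by auto
  next
    case (Suc K)
    then have A: "\<forall>i\<le>K. x i \<in> Gamma_under f xs eta rho" and P: "S K + D K \<le> D 0 + M * (phi (r 1) - phi (r (Suc K))) + (\<Sum>k=1..K. eps k)"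
      by auto
    have B: "x (Suc K) \<in> Gamma_under f xs eta delta" using S_i A by blast
    have "phi (r (Suc K)) \<ge> 0" using phinn[OF B] .
    then have "phi (r 1) - phi (r (Suc K)) \<le> phi (r 0)" using phi1 by linarith
    then have "M * (phi (r 1) - phi (r (Suc K))) \<le> M * phi (r 0)" using M0 by (rule mult_left_mono)
    then have "S K \<le> D 0 + M * phi (r 0) + (\<Sum>i. eps (Suc i))"
      using P D0[of K] epsb[of K] by linarith
    moreover have "(\<Sum>k<Suc K. D k) = D 0 + S K" unfolding S_def sum_1_shift sum.lessThan_Suc_shift by simp
    ultimately have "norm (x (Suc K) - xs) \<le> norm (x 0 - xs) + 2 * sqrt (r 0 / a 0) + M * phi (r 0) + (\<Sum>i. eps (Suc i))"
      using tri[of "Suc K"] D0bound by linarith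
    also have "\<dots> < rho" using S_ii(2) unfolding M_def r_def F_def c_def by (simp add: norm_minus_commute)
    finally have C: "x (Suc K) \<in> Gamma_under f xs eta rho" using B unfolding Gu by auto
    have A': "\<forall>i\<le>Suc K. x i \<in> Gamma_under f xs eta rho" using A C le_Suc_eq by auto
    have B': "x (Suc (Suc K)) \<in> Gamma_under f xs eta delta" using S_i A' by blast
    have st: "2 * D (Suc K) \<le> D K + M * (phi (r (Suc K)) - phi (r (Suc (Suc K)))) + eps (Suc K)"
      using step[OF C B'] .
    have "S (Suc K) = S K + D (Suc K)" unfolding S_def by simp
    then have "S (Suc K) + D (Suc K) \<le> D 0 + M * (phi (r 1) - phi (r (Suc (Suc K)))) + (\<Sum>k=1..Suc K. eps k)"
      using P st by (simp add: algebra_simps)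
    then show ?case using A' by simp
  qed
  show ?thesis
  proof (intro allI impI conjI)
    fix K :: nat assume "K \<ge> 1"
    show "x K \<in> Gamma_under f xs eta rho" using main[of K] by auto
    show "(\<Sum>k=1..K. norm (x (Suc k) - x k)) + norm (x (Suc K) - x K)
       \<le> norm (x 1 - x 0) + (SUP k\<in>{1..}. 1 / (a k * b k)) *
             (phi (real_of_ereal (f (x 1)) - real_of_ereal (f xs))
              - phi (real_of_ereal (f (x (Suc K))) - real_of_ereal (f xs))) + (\<Sum>k=1..K. eps k)"
    proof -
      have e: "(\<Sum>k=1..K. norm (x (Suc k) - x k)) = S K" "norm (x (Suc K) - x K) = D K"
        "norm (x 1 - x 0) = D 0" "(SUP k\<in>{1..}. 1 / (a k * b k)) = M"
        "real_of_ereal (f (x 1)) - real_of_ereal (f xs) = r 1"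
        "real_of_ereal (f (x (Suc K))) - real_of_ereal (f xs) = r (Suc K)"
        unfolding S_def D_def M_def r_def F_def c_def by simp_all
      show ?thesis unfolding e using main[of K] by blast
    qed
  qed
qed

end
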